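(* Let $c_0=(x_0,y_0,z_0)=(-0.2794,\,0.2451,\,0.36)\in\mathbb R^3$ and let $L=B(c_0,1)\cap B(-c_0,1)\subseteq\mathbb R^3$. Then $S_{e_3}(L)\notin\mathcal S_3$. More precisely, let $w=(0.4154,\,0.7262)$ and define, near $w$, \[ f_d(x,y)=-z_0+\sqrt{1-(x-x_0)^2-(y-y_0)^2},\qquad g_u(x,y)=-z_0+\sqrt{1-(x+x_0)^2-(y+y_0)^2}, \] and $h=(f_d+g_u)/2$. Then $w\in P_{e_3}(L)$, $L\cap((w,0)+\mathbb Re_3)=\{(w,z): -f_d(w)\le z\le g_u(w)\}$, the boundary of $S_{e_3}(L)$ near the points $(w,\pm h(w))$ is given by the graphs of $\pm h$, and the sectional curvature of this boundary at $(w,h(w))$ (and at $(w,-h(w))$) in direction $e_1$, \[ \kappa_h(w,e_1)=\frac{|(\nabla^2h(w))_{1,1}|}{\sqrt{1+\|\nabla h(w)\|^2}\,\bigl(1+\langle e_1,\nabla h(w)\rangle^2\bigr)}, \] is strictly smaller than $1$.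
   Context: For $c\in\mathbb R^3$, $B(c,1)$ is the closed Euclidean unit ball centered at $c$. $\mathcal S_3$ is the class of all intersections of families of closed Euclidean unit balls in $\mathbb R^3$; a set in $\mathcal S_3$ with smooth boundary has all sectional curvatures at least $1$ at every boundary point. $P_{e_3}$ is orthogonal projection onto $e_3^\perp\cong\mathbb R^2$. For a compact convex set $K$ and $u\in S^{2}$, for each $x\in P_{u^\perp}(K)$ write $K\cap(x+\mathbb Ru)=[x+a(x)u,x+b(x)u]$; the Steiner symmetral is $S_u(K)=\{x+yu: x\in P_{u^\perp}(K),\ |y|\le |b(x)-a(x)|/2\}$. *)

theory Defs
  imports "HOL-Analysis.Analysis"
begin

definition unit_ball3 :: "real^3 \<Rightarrow> (real^3) set" where
  "unit_ball3 c = cball c 1"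

definition S3 :: "(real^3) set set" where
  "S3 = {K. \<exists>F :: (real^3) set. K = (\<Inter>c\<in>F. unit_ball3 c)}"

definition proj_perp :: "real^3 \<Rightarrow> real^3 \<Rightarrow> real^3" where
  "proj_perp u p = p - (p \<bullet> u) *\<^sub>R u"

text \<open>Steiner symmetral: for x in the projection, the fibre K \<inter> (x + R u) is
  [x + a u, x + b u] with a = Inf, b = Sup of the parameter set.\<close>
definition steiner_sym :: "real^3 \<Rightarrow> (real^3) set \<Rightarrow> (real^3) set" where
  "steiner_sym u K =
     {x + y *\<^sub>R u | x y. x \<in> proj_perp u ` K \<and>
        \<bar>y\<bar> \<le> \<bar>Sup {t. x + t *\<^sub>R u \<in> K} - Inf {t. x + t *\<^sub>R u \<in> K}\<bar> / 2}"

definition e3 :: "real^3" where "e3 = axis 3 1"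

definition x0 :: real where "x0 = -0.2794"
definition y0 :: real where "y0 = 0.2451"
definition z0 :: real where "z0 = 0.36"
definition c0 :: "real^3" where "c0 = vector [x0, y0, z0]"
definition L :: "(real^3) set" where "L = unit_ball3 c0 \<inter> unit_ball3 (- c0)"
definition w :: "real \<times> real" where "w = (0.4154, 0.7262)"

definition f_d :: "real \<times> real \<Rightarrow> real" where
  "f_d p = - z0 + sqrt (1 - (fst p - x0)\<^sup>2 - (snd p - y0)\<^sup>2)"
definition g_u :: "real \<times> real \<Rightarrow> real" where
  "g_u p = - z0 + sqrt (1 - (fst p + x0)\<^sup>2 - (snd p + y0)\<^sup>2)"
definition h :: "real \<times> real \<Rightarrow> real" where
  "h p = (f_d p + g_u p) / 2"

definition pt :: "real \<times> real \<Rightarrow> real \<Rightarrow> real^3" where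
  "pt p z = vector [fst p, snd p, z]"

definition d1 :: "(real \<times> real \<Rightarrow> real) \<Rightarrow> real \<times> real \<Rightarrow> real" where
  "d1 f p = deriv (\<lambda>s. f (s, snd p)) (fst p)"
definition d2 :: "(real \<times> real \<Rightarrow> real) \<Rightarrow> real \<times> real \<Rightarrow> real" where
  "d2 f p = deriv (\<lambda>s. f (fst p, s)) (snd p)"

definition kappa_e1 :: "(real \<times> real \<Rightarrow> real) \<Rightarrow> real \<times> real \<Rightarrow> real" where
  "kappa_e1 f p = \<bar>d1 (d1 f) p\<bar> /
     (sqrt (1 + (d1 f p)\<^sup>2 + (d2 f p)\<^sup>2) * (1 + (d1 f p)\<^sup>2))"

end

theory Submission
  imports Defs
begin


lemma dist3_sq: "(dist (u::real^3) v)\<^sup>2 = (u$1-v$1)\<^sup>2 + (u$2-v$2)\<^sup>2 + (u$3-v$3)\<^sup>2"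
  by (simp only: dist_norm power2_norm_eq_inner) (simp add: inner_vec_def sum_3 power2_eq_square)

lemma dist3_le1: "dist (u::real^3) v \<le> 1 \<longleftrightarrow> (u$1-v$1)\<^sup>2 + (u$2-v$2)\<^sup>2 + (u$3-v$3)\<^sup>2 \<le> 1"
  by (metis dist3_sq abs_le_square_iff abs_one one_power2 zero_le_dist abs_of_nonneg)

lemma pt_nth[simp]: "pt p z $ 1 = fst p" "pt p z $ 2 = snd p" "pt p z $ 3 = z"
  by (simp_all add: pt_def)

lemma pt_eta: "v = pt (v$1, v$2) (v$3)"
  by (simp add: vec_eq_iff forall_3)

lemma pt_eq_iff: "pt p z = pt p' z' \<longleftrightarrow> p = p' \<and> z = z'"
  by (auto simp: vec_eq_iff forall_3 prod_eq_iff)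

lemma e3_nth[simp]: "e3 $ 1 = 0" "e3 $ 2 = 0" "e3 $ 3 = 1"
  by (simp_all add: e3_def axis_def)

lemma inner_e3: "v \<bullet> e3 = v $ 3"
  by (simp add: inner_vec_def sum_3)

lemma proj_pt: "proj_perp e3 (pt p z) = pt p 0"
  by (simp add: proj_perp_def inner_e3 vec_eq_iff forall_3)

lemma pt_plus_e3: "pt p a + t *\<^sub>R e3 = pt p (a + t)"
  by (simp add: vec_eq_iff forall_3)

definition A1 :: "real \<times> real \<Rightarrow> real" where "A1 p = 1 - (fst p - x0)\<^sup>2 - (snd p - y0)\<^sup>2"
definition A2 :: "real \<times> real \<Rightarrow> real" where "A2 p = 1 - (fst p + x0)\<^sup>2 - (snd p + y0)\<^sup>2"

lemma c0_nth[simp]: "c0$1 = x0" "c0$2 = y0" "c0$3 = z0"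
  by (simp_all add: c0_def)

lemma mem_L: "pt p t \<in> L \<longleftrightarrow> (t - z0)\<^sup>2 \<le> A1 p \<and> (t + z0)\<^sup>2 \<le> A2 p"
  unfolding L_def unit_ball3_def A1_def A2_def
  by (simp add: dist3_le1 power2_eq_square algebra_simps)

lemma sq_le_sqrt_iff: "0 \<le> A \<Longrightarrow> s\<^sup>2 \<le> A \<longleftrightarrow> \<bar>s\<bar> \<le> sqrt A"
  by (metis real_sqrt_abs real_sqrt_le_iff)

definition good :: "real \<times> real \<Rightarrow> bool" where
  "good p \<longleftrightarrow> 0 \<le> A1 p \<and> 0 \<le> A2 p \<and> sqrt (A1 p) - sqrt (A2 p) \<le> 2 * z0
     \<and> sqrt (A2 p) - sqrt (A1 p) \<le> 2 * z0 \<and> 0 \<le> h p"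

lemma fd_A1: "f_d p = - z0 + sqrt (A1 p)" by (simp add: f_d_def A1_def)
lemma gu_A2: "g_u p = - z0 + sqrt (A2 p)" by (simp add: g_u_def A2_def)
lemma h_A: "h p = (sqrt (A1 p) + sqrt (A2 p)) / 2 - z0" by (simp add: h_def fd_A1 gu_A2)

lemma fiber:
  assumes "good p"
  shows "{t. pt p t \<in> L} = {- f_d p .. g_u p}"
proof -
  have a: "0 \<le> A1 p" "0 \<le> A2 p" "sqrt (A1 p) - sqrt (A2 p) \<le> 2 * z0"
     "sqrt (A2 p) - sqrt (A1 p) \<le> 2 * z0" using assms by (auto simp: good_def)
  show ?thesis
    unfolding mem_L sq_le_sqrt_iff[OF a(1)] sq_le_sqrt_iff[OF a(2)] fd_A1 gu_A2
    using a(3,4) by (auto simp: abs_le_iff)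
qed

lemma fiber_le: "good p \<Longrightarrow> - f_d p \<le> g_u p"
  by (simp add: good_def h_def)

lemma steiner_mem:
  assumes "good p"
  shows "pt p z \<in> steiner_sym e3 L \<longleftrightarrow> \<bar>z\<bar> \<le> h p"
proof -
  have F: "{t. pt p 0 + t *\<^sub>R e3 \<in> L} = {- f_d p .. g_u p}"
    unfolding pt_plus_e3 add_0_left by (rule fiber[OF assms])
  have le: "- f_d p \<le> g_u p" using fiber_le[OF assms] .
  have hh: "\<bar>Sup {t. pt p 0 + t *\<^sub>R e3 \<in> L} - Inf {t. pt p 0 + t *\<^sub>R e3 \<in> L}\<bar> / 2 = h p"
  proof -
    have A: "g_u p - - f_d p = 2 * h p" by (simp add: h_def)
    have B: "0 \<le> h p" using le by (simp add: h_def)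
    show ?thesis unfolding F cSup_atLeastAtMost[OF le] cInf_atLeastAtMost[OF le] A
      using B by simp
  qed
  show ?thesis
  proof
    assume "pt p z \<in> steiner_sym e3 L"
    then obtain x y where xy: "pt p z = x + y *\<^sub>R e3" "x \<in> proj_perp e3 ` L"
        "\<bar>y\<bar> \<le> \<bar>Sup {t. x + t *\<^sub>R e3 \<in> L} - Inf {t. x + t *\<^sub>R e3 \<in> L}\<bar> / 2"
      unfolding steiner_sym_def by blast
    from xy(2) obtain v where v: "x = proj_perp e3 v" by blast
    have xv: "x = pt (v$1, v$2) 0" using v by (simp add: proj_perp_def inner_e3 vec_eq_iff forall_3)
    with xy(1) have pv: "p = (v$1,v$2)" and zy: "z = y" by (simp_all add: pt_plus_e3 pt_eq_iff)
    have x: "x = pt p 0" using xv pv by simp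
    show "\<bar>z\<bar> \<le> h p" using xy(3) hh unfolding x zy by simp
  next
    assume z: "\<bar>z\<bar> \<le> h p"
    have "g_u p \<in> {t. pt p t \<in> L}" unfolding fiber[OF assms] using le by simp
    hence "pt p (g_u p) \<in> L" by simp
    hence "pt p 0 \<in> proj_perp e3 ` L" by (rule image_eqI[where f="proj_perp e3" and x="pt p (g_u p)", OF proj_pt[symmetric, of p "g_u p"]])
    moreover have "pt p z = pt p 0 + z *\<^sub>R e3" by (simp add: pt_plus_e3)
    ultimately show "pt p z \<in> steiner_sym e3 L"
      unfolding steiner_sym_def using z hh
      by (intro CollectI exI[of _ "pt p 0"] exI[of _ z]) simp
  qed
qed




definition inU :: "real \<times> real \<Rightarrow> bool" where
  "inU p \<longleftrightarrow> 0 < A1 p \<and> 0 < A2 p \<and> sqrt (A1 p) - sqrt (A2 p) < 2 * z0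
     \<and> sqrt (A2 p) - sqrt (A1 p) < 2 * z0 \<and> 0 < h p"

lemma inU_good: "inU p \<Longrightarrow> good p"
  by (auto simp: inU_def good_def)

lemma cont_p: "continuous_on UNIV (\<lambda>v::real^3. F (v$1, v$2))" if "continuous_on UNIV F" for F
proof -
  have "continuous_on UNIV (\<lambda>v::real^3. (v$1, v$2))"
    by (intro continuous_intros)
  then show ?thesis using continuous_on_compose2[OF that] by auto
qed

lemma cont_A1: "continuous_on UNIV A1" unfolding A1_def by (intro continuous_intros)
lemma cont_A2: "continuous_on UNIV A2" unfolding A2_def by (intro continuous_intros)
lemma cont_h: "continuous_on UNIV h" unfolding h_def f_d_def g_u_def by (intro continuous_intros) auto
lemma cont_sA1: "continuous_on UNIV (\<lambda>p. sqrt (A1 p))" using cont_A1 by (intro continuous_intros)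
lemma cont_sA2: "continuous_on UNIV (\<lambda>p. sqrt (A2 p))" using cont_A2 by (intro continuous_intros)

lemma open_inU3: "open {v::real^3. inU (v$1, v$2) \<and> P v}" if "open {v. P v}" for P
  unfolding inU_def
  apply (intro open_Collect_conj that)
  apply (intro open_Collect_less cont_p continuous_intros cont_A1 cont_A2 cont_h cont_sA1 cont_sA2)+
  done

abbreviation "K \<equiv> steiner_sym e3 L"

lemma K_iff: "inU (v$1, v$2) \<Longrightarrow> v \<in> K \<longleftrightarrow> \<bar>v$3\<bar> \<le> h (v$1, v$2)"
  using steiner_mem[OF inU_good, of "(v$1, v$2)" "v$3"] pt_eta[of v] by simp

lemma dist_pt_same: "dist (pt p a) (pt p b) = \<bar>a - b\<bar>"
proof -
  have "(dist (pt p a) (pt p b))\<^sup>2 = (a - b)\<^sup>2" by (simp add: dist3_sq)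
  then show ?thesis by (metis real_sqrt_abs real_sqrt_unique zero_le_dist)
qed

lemma frontier_iff:
  assumes p: "inU p"
  shows "pt p z \<in> frontier K \<longleftrightarrow> \<bar>z\<bar> = h p"
proof (cases "\<bar>z\<bar> < h p")
  case True
  let ?W = "{v::real^3. inU (v$1, v$2) \<and> \<bar>v$3\<bar> < h (v$1, v$2)}"
  have "open ?W"
    by (intro open_inU3 open_Collect_less cont_p cont_h continuous_intros)
  moreover have "?W \<subseteq> K" using K_iff by fastforce
  moreover have "pt p z \<in> ?W" using True p by simp
  ultimately have "pt p z \<in> interior K" by (meson interiorI)
  then show ?thesis using True by (simp add: frontier_def)
next
  case False
  show ?thesis
  proof (cases "h p < \<bar>z\<bar>")
    case True
    let ?W = "{v::real^3. inU (v$1, v$2) \<and> h (v$1, v$2) < \<bar>v$3\<bar>}"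
    have "open ?W"
      by (intro open_inU3 open_Collect_less cont_p cont_h continuous_intros)
    hence "closed (- ?W)" by (simp add: closed_def)
    moreover have "K \<subseteq> - ?W" using K_iff by fastforce
    ultimately have "closure K \<subseteq> - ?W" by (rule closure_minimal[rotated])
    moreover have "pt p z \<in> ?W" using True p by simp
    ultimately have "pt p z \<notin> closure K" by blast
    then show ?thesis using True by (simp add: frontier_def)
  next
    case False2: False
    hence eq: "\<bar>z\<bar> = h p" using False by linarith
    have inK: "pt p z \<in> K" using K_iff[of "pt p z"] p eq by simp
    have "pt p z \<notin> interior K"
    proof
      assume "pt p z \<in> interior K"
      then obtain e where e: "0 < e" "ball (pt p z) e \<subseteq> K" by (meson mem_interior)
      define d where "d = (if 0 \<le> z then e / 2 else - e / 2)"
      have "\<bar>z + d\<bar> = \<bar>z\<bar> + e / 2" using e(1) by (simp add: d_def abs_if)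
      moreover have "pt p (z + d) \<in> ball (pt p z) e"
        using e(1) by (simp add: dist_pt_same d_def)
      hence "pt p (z + d) \<in> K" using e(2) by blast
      hence "\<bar>z + d\<bar> \<le> h p" using K_iff[of "pt p (z + d)"] p by simp
      ultimately show False using eq e(1) by linarith
    qed
    then show ?thesis using inK eq by (simp add: frontier_def closure_subset[THEN subsetD])
  qed
qed

lemma frontier_local:
  assumes s: "s = 1 \<or> s = -1" and p: "inU q"
  shows "\<exists>V. open V \<and> pt q (s * h q) \<in> V \<and>
          frontier K \<inter> V = {pt x (s * h x) | x. True} \<inter> V"
proof (intro exI conjI)
  let ?V = "{v::real^3. inU (v$1, v$2) \<and> 0 < s * v$3}"
  show "open ?V" by (intro open_inU3 open_Collect_less continuous_intros)
  have hq: "0 < h q" using p by (simp add: inU_def)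
  show "pt q (s * h q) \<in> ?V" using s p hq by auto
  show "frontier K \<inter> ?V = {pt x (s * h x) | x. True} \<inter> ?V"
  proof (intro set_eqI iffI)
    fix v assume v: "v \<in> frontier K \<inter> ?V"
    let ?p = "(v$1, v$2)"
    have vp: "v = pt ?p (v$3)" by (rule pt_eta)
    have "\<bar>v$3\<bar> = h ?p" using v frontier_iff[of ?p "v$3"] vp by auto
    moreover have "0 < s * v$3" using v by simp
    ultimately have "v$3 = s * h ?p" using s by (auto simp: abs_if)
    then show "v \<in> {pt x (s * h x) | x. True} \<inter> ?V" using v vp by auto
  next
    fix v assume v: "v \<in> {pt x (s * h x) | x. True} \<inter> ?V"
    then obtain x where x: "v = pt x (s * h x)" by blast
    have ix: "inU x" using v x by simp
    have "\<bar>s * h x\<bar> = h x" using s ix by (auto simp: inU_def)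
    then have "v \<in> frontier K" using frontier_iff[OF ix] x by simp
    then show "v \<in> frontier K \<inter> ?V" using v by blast
  qed
qed




lemma D1:
  fixes a b s :: real
  assumes "0 < 1 - (s - a)\<^sup>2 - b"
  shows "((\<lambda>s. sqrt (1 - (s - a)\<^sup>2 - b)) has_real_derivative (- (s - a) / sqrt (1 - (s - a)\<^sup>2 - b))) (at s)"
proof -
  have der: "((\<lambda>s. sqrt (1 - (s - a)\<^sup>2 - b)) has_real_derivative
      (inverse (sqrt (1 - (s - a)\<^sup>2 - b)) / 2) * (- (2 * (s - a)))) (at s)"
    by (rule DERIV_chain2[where g="\<lambda>s. 1 - (s - a)\<^sup>2 - b", OF DERIV_real_sqrt[OF assms]]) (auto intro!: derivative_eq_intros)
  have eq: "(inverse (sqrt (1 - (s - a)\<^sup>2 - b)) / 2) * (- (2 * (s - a))) = - (s - a) / sqrt (1 - (s - a)\<^sup>2 - b)"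
    by (simp add: divide_simps)
  show ?thesis using der unfolding eq .
qed

lemma D2:
  fixes a b s :: real
  assumes A: "0 < 1 - (s - a)\<^sup>2 - b"
  shows "((\<lambda>s. (s - a) / sqrt (1 - (s - a)\<^sup>2 - b)) has_real_derivative
     ((1 - b) / ((1 - (s - a)\<^sup>2 - b) * sqrt (1 - (s - a)\<^sup>2 - b)))) (at s)"
proof -
  define r where "r = sqrt (1 - (s - a)\<^sup>2 - b)"
  define X where "X = 1 - (s - a)\<^sup>2 - b"
  have r0: "0 < r" using A by (simp add: r_def)
  have rr: "r * r = X" using A by (simp add: r_def X_def)
  have der: "((\<lambda>s. (s - a) / sqrt (1 - (s - a)\<^sup>2 - b)) has_real_derivative
     ((1 * r - (s - a) * (- (s - a) / r)) / (r * r))) (at s)"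
    using r0 unfolding r_def
    by (intro DERIV_divide[OF _ D1[OF A]]) (auto intro!: derivative_eq_intros)
  have "1 * r - (s - a) * (- (s - a) / r) = (r * r + (s - a)\<^sup>2) / r"
    using r0 by (simp add: field_simps power2_eq_square)
  also have "\<dots> = (1 - b) / r" unfolding rr X_def by simp
  finally have "(1 * r - (s - a) * (- (s - a) / r)) / (r * r) = (1 - b) / r / X"
    by (simp add: rr)
  also have "\<dots> = (1 - b) / (X * r)" by (simp add: field_simps)
  finally show ?thesis using der unfolding X_def r_def by simp
qed




lemma bounds_good:
  assumes "l1\<^sup>2 \<le> A1 p" "A1 p \<le> u1\<^sup>2" "l2\<^sup>2 \<le> A2 p" "A2 p \<le> u2\<^sup>2"
    "0 \<le> l1" "0 \<le> l2" "0 \<le> u1" "0 \<le> u2"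
  shows "l1 \<le> sqrt (A1 p)" "sqrt (A1 p) \<le> u1" "l2 \<le> sqrt (A2 p)" "sqrt (A2 p) \<le> u2"
    "(l1 + l2) / 2 - z0 \<le> h p" "h p \<le> (u1 + u2) / 2 - z0"
proof -
  show a: "l1 \<le> sqrt (A1 p)" by (rule real_le_rsqrt) fact
  show b: "sqrt (A1 p) \<le> u1" by (rule real_le_lsqrt) fact+
  show c: "l2 \<le> sqrt (A2 p)" by (rule real_le_rsqrt) fact
  show d: "sqrt (A2 p) \<le> u2" by (rule real_le_lsqrt) fact+
  show "(l1 + l2) / 2 - z0 \<le> h p" using a c by (simp add: h_A)
  show "h p \<le> (u1 + u2) / 2 - z0" using b d by (simp add: h_A)
qed

lemma bnd_w_pre: "(534598681/1000000000)\<^sup>2 \<le> A1 ((2077/5000), (3631/5000))" "A1 ((2077/5000), (3631/5000)) \<le> (267299341/500000000)\<^sup>2" "(24392721/125000000)\<^sup>2 \<le> A2 ((2077/5000), (3631/5000))" "A2 ((2077/5000), (3631/5000)) \<le> (195141769/1000000000)\<^sup>2"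
  "0 \<le> ((534598681/1000000000)::real)" "0 \<le> ((24392721/125000000)::real)" "0 \<le> ((267299341/500000000)::real)" "0 \<le> ((195141769/1000000000)::real)"
  by (simp_all add: A1_def A2_def x0_def y0_def power2_eq_square)

lemmas bnd_w = bounds_good[OF bnd_w_pre]

lemma good_w: "good ((2077/5000), (3631/5000))"
  using bnd_w unfolding good_def
  by (auto simp: z0_def) (auto simp: A1_def A2_def x0_def y0_def power2_eq_square)

lemma bnd_P0_pre: "(74226283/125000000)\<^sup>2 \<le> A1 ((71/200), (37/50))" "A1 ((71/200), (37/50)) \<le> (118762053/200000000)\<^sup>2" "(154475337/1000000000)\<^sup>2 \<le> A2 ((71/200), (37/50))" "A2 ((71/200), (37/50)) \<le> (77237669/500000000)\<^sup>2"
  "0 \<le> ((74226283/125000000)::real)" "0 \<le> ((154475337/1000000000)::real)" "0 \<le> ((118762053/200000000)::real)" "0 \<le> ((77237669/500000000)::real)"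
  by (simp_all add: A1_def A2_def x0_def y0_def power2_eq_square)

lemmas bnd_P0 = bounds_good[OF bnd_P0_pre]

lemma good_P0: "good ((71/200), (37/50))"
  using bnd_P0 unfolding good_def
  by (auto simp: z0_def) (auto simp: A1_def A2_def x0_def y0_def power2_eq_square)

lemma bnd_P1_pre: "(323793773/500000000)\<^sup>2 \<le> A1 ((3/10), (37/50))" "A1 ((3/10), (37/50)) \<le> (647587547/1000000000)\<^sup>2" "(170744341/1000000000)\<^sup>2 \<le> A2 ((3/10), (37/50))" "A2 ((3/10), (37/50)) \<le> (85372171/500000000)\<^sup>2"
  "0 \<le> ((323793773/500000000)::real)" "0 \<le> ((170744341/1000000000)::real)" "0 \<le> ((647587547/1000000000)::real)" "0 \<le> ((85372171/500000000)::real)"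
  by (simp_all add: A1_def A2_def x0_def y0_def power2_eq_square)

lemmas bnd_P1 = bounds_good[OF bnd_P1_pre]

lemma good_P1: "good ((3/10), (37/50))"
  using bnd_P1 unfolding good_def
  by (auto simp: z0_def) (auto simp: A1_def A2_def x0_def y0_def power2_eq_square)

lemma bnd_P2_pre: "(310118699/500000000)\<^sup>2 \<le> A1 ((33/100), (739/1000))" "A1 ((33/100), (739/1000)) \<le> (620237399/1000000000)\<^sup>2" "(17025519/100000000)\<^sup>2 \<le> A2 ((33/100), (739/1000))" "A2 ((33/100), (739/1000)) \<le> (170255191/1000000000)\<^sup>2"
  "0 \<le> ((310118699/500000000)::real)" "0 \<le> ((17025519/100000000)::real)" "0 \<le> ((620237399/1000000000)::real)" "0 \<le> ((170255191/1000000000)::real)"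
  by (simp_all add: A1_def A2_def x0_def y0_def power2_eq_square)

lemmas bnd_P2 = bounds_good[OF bnd_P2_pre]

lemma good_P2: "good ((33/100), (739/1000))"
  using bnd_P2 unfolding good_def
  by (auto simp: z0_def) (auto simp: A1_def A2_def x0_def y0_def power2_eq_square)

lemma bnd_Q_pre: "(619439771/1000000000)\<^sup>2 \<le> A1 ((33/100), (37/50))" "A1 ((33/100), (37/50)) \<le> (154859943/250000000)\<^sup>2" "(41092601/250000000)\<^sup>2 \<le> A2 ((33/100), (37/50))" "A2 ((33/100), (37/50)) \<le> (32874081/200000000)\<^sup>2"
  "0 \<le> ((619439771/1000000000)::real)" "0 \<le> ((41092601/250000000)::real)" "0 \<le> ((154859943/250000000)::real)" "0 \<le> ((32874081/200000000)::real)"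
  by (simp_all add: A1_def A2_def x0_def y0_def power2_eq_square)

lemmas bnd_Q = bounds_good[OF bnd_Q_pre]

lemma good_Q: "good ((33/100), (37/50))"
  using bnd_Q unfolding good_def
  by (auto simp: z0_def) (auto simp: A1_def A2_def x0_def y0_def power2_eq_square)




lemma kappa_num:
  fixes t1 t2 L1 U1 L2 U2 a1 a2 b1 b2 c1 c2 :: real
  assumes t: "0 < L1" "L1 \<le> t1" "t1 \<le> U1" "0 < L2" "L2 \<le> t2" "t2 \<le> U2"
    and c: "0 \<le> a1" "0 \<le> a2" "0 \<le> b1" "0 \<le> b2" "0 \<le> c1" "0 \<le> c2"
    and key: "((c1 * U1^3 + c2 * U2^3) / 2)\<^sup>2 < (1 + ((a1 * L1 + a2 * L2) / 2)\<^sup>2 + ((b1 * L1 + b2 * L2) / 2)\<^sup>2) * (1 + ((a1 * L1 + a2 * L2) / 2)\<^sup>2)\<^sup>2"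
  shows "(c1 * t1^3 + c2 * t2^3) / 2 < sqrt (1 + ((a1 * t1 + a2 * t2) / 2)\<^sup>2 + ((b1 * t1 + b2 * t2) / 2)\<^sup>2) * (1 + ((a1 * t1 + a2 * t2) / 2)\<^sup>2)"
proof -
  define M where "M = (c1 * U1^3 + c2 * U2^3) / 2"
  define X where "X = ((a1 * L1 + a2 * L2) / 2)\<^sup>2"
  define Y where "Y = ((b1 * L1 + b2 * L2) / 2)\<^sup>2"
  have "t1^3 \<le> U1^3" using t by (intro power_mono) auto
  moreover have "t2^3 \<le> U2^3" using t by (intro power_mono) auto
  ultimately have "c1 * t1^3 \<le> c1 * U1^3" "c2 * t2^3 \<le> c2 * U2^3"
    using c by (simp_all add: mult_left_mono)
  hence lhs: "(c1 * t1^3 + c2 * t2^3) / 2 \<le> M"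
    unfolding M_def by (intro divide_right_mono add_mono) auto
  have M0: "0 \<le> M" unfolding M_def using c t by simp
  have "a1 * L1 \<le> a1 * t1" "a2 * L2 \<le> a2 * t2" using t c by (simp_all add: mult_left_mono)
  hence "a1 * L1 + a2 * L2 \<le> a1 * t1 + a2 * t2" by linarith
  moreover have "0 \<le> a1 * L1 + a2 * L2" using t c by simp
  ultimately have X: "X \<le> ((a1 * t1 + a2 * t2) / 2)\<^sup>2" unfolding X_def
    by (intro power_mono) auto
  have "b1 * L1 \<le> b1 * t1" "b2 * L2 \<le> b2 * t2" using t c by (simp_all add: mult_left_mono)
  hence "b1 * L1 + b2 * L2 \<le> b1 * t1 + b2 * t2" by linarith
  moreover have "0 \<le> b1 * L1 + b2 * L2" using t c by simp
  ultimately have Y: "Y \<le> ((b1 * t1 + b2 * t2) / 2)\<^sup>2" unfolding Y_def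
    by (intro power_mono) auto
  have X0: "0 \<le> X" "0 \<le> Y" unfolding X_def Y_def by simp_all
  have "M = sqrt (M\<^sup>2)" using M0 by simp
  also have "\<dots> < sqrt ((1 + X + Y) * (1 + X)\<^sup>2)" unfolding M_def X_def Y_def by (rule real_sqrt_less_mono[OF key])
  also have "\<dots> = sqrt (1 + X + Y) * (1 + X)" using X0 by (simp add: real_sqrt_mult)
  also have "\<dots> \<le> sqrt (1 + ((a1 * t1 + a2 * t2) / 2)\<^sup>2 + ((b1 * t1 + b2 * t2) / 2)\<^sup>2) * (1 + ((a1 * t1 + a2 * t2) / 2)\<^sup>2)"
    using X Y X0 by (intro mult_mono) auto
  finally show ?thesis using lhs by linarith
qed

definition H1 :: "real \<times> real \<Rightarrow> real" where
  "H1 p = (- (fst p - x0) / sqrt (A1 p) - (fst p + x0) / sqrt (A2 p)) / 2"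
definition H2 :: "real \<times> real \<Rightarrow> real" where
  "H2 p = (- (snd p - y0) / sqrt (A1 p) - (snd p + y0) / sqrt (A2 p)) / 2"
definition H11 :: "real \<times> real \<Rightarrow> real" where
  "H11 p = - ((1 - (snd p - y0)\<^sup>2) / (A1 p * sqrt (A1 p)) + (1 - (snd p + y0)\<^sup>2) / (A2 p * sqrt (A2 p))) / 2"

lemma dh1:
  assumes "0 < A1 p" "0 < A2 p"
  shows "((\<lambda>s. h (s, snd p)) has_real_derivative H1 p) (at (fst p))"
proof -
  obtain x y where p: "p = (x, y)" by (cases p)
  have e: "(\<lambda>s. h (s, y)) = (\<lambda>s. (sqrt (1 - (s - x0)\<^sup>2 - (y - y0)\<^sup>2) + sqrt (1 - (s - - x0)\<^sup>2 - (y + y0)\<^sup>2)) / 2 - z0)"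
    by (simp add: h_A A1_def A2_def fun_eq_iff)
  have 1: "0 < 1 - (x - x0)\<^sup>2 - (y - y0)\<^sup>2" using assms(1) by (simp add: p A1_def)
  have 2: "0 < 1 - (x - - x0)\<^sup>2 - (y + y0)\<^sup>2" using assms(2) by (simp add: p A2_def)
  have "((\<lambda>s. (sqrt (1 - (s - x0)\<^sup>2 - (y - y0)\<^sup>2) + sqrt (1 - (s - - x0)\<^sup>2 - (y + y0)\<^sup>2)) / 2 - z0)
     has_real_derivative ((- (x - x0) / sqrt (1 - (x - x0)\<^sup>2 - (y - y0)\<^sup>2) + - (x - - x0) / sqrt (1 - (x - - x0)\<^sup>2 - (y + y0)\<^sup>2)) / 2 - 0)) (at x)"
    by (intro DERIV_diff DERIV_cdivide DERIV_add D1 1 2 DERIV_const)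
  moreover have "H1 (x, y) = (- (x - x0) / sqrt (1 - (x - x0)\<^sup>2 - (y - y0)\<^sup>2) + - (x - - x0) / sqrt (1 - (x - - x0)\<^sup>2 - (y + y0)\<^sup>2)) / 2 - 0"
  proof -
    have q1: "1 - (x - x0)\<^sup>2 - (y - y0)\<^sup>2 = A1 (x, y)" by (simp add: A1_def)
    have q2: "1 - (x - - x0)\<^sup>2 - (y + y0)\<^sup>2 = A2 (x, y)" by (simp add: A2_def)
    show ?thesis unfolding q1 q2 unfolding H1_def fst_conv snd_conv diff_minus_eq_add
      by (simp only: diff_0_right diff_conv_add_uminus minus_divide_left)
  qed
  ultimately show ?thesis unfolding p fst_conv snd_conv e by (simp only:)
qed

lemma dh2:
  assumes "0 < A1 p" "0 < A2 p"
  shows "((\<lambda>t. h (fst p, t)) has_real_derivative H2 p) (at (snd p))"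
proof -
  obtain x y where p: "p = (x, y)" by (cases p)
  have e: "(\<lambda>t. h (x, t)) = (\<lambda>t. (sqrt (1 - (t - y0)\<^sup>2 - (x - x0)\<^sup>2) + sqrt (1 - (t - - y0)\<^sup>2 - (x + x0)\<^sup>2)) / 2 - z0)"
    by (simp add: h_A A1_def A2_def fun_eq_iff algebra_simps)
  have 1: "0 < 1 - (y - y0)\<^sup>2 - (x - x0)\<^sup>2" using assms(1) by (simp add: p A1_def)
  have 2: "0 < 1 - (y - - y0)\<^sup>2 - (x + x0)\<^sup>2" using assms(2) by (simp add: p A2_def)
  have "((\<lambda>t. (sqrt (1 - (t - y0)\<^sup>2 - (x - x0)\<^sup>2) + sqrt (1 - (t - - y0)\<^sup>2 - (x + x0)\<^sup>2)) / 2 - z0)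
     has_real_derivative ((- (y - y0) / sqrt (1 - (y - y0)\<^sup>2 - (x - x0)\<^sup>2) + - (y - - y0) / sqrt (1 - (y - - y0)\<^sup>2 - (x + x0)\<^sup>2)) / 2 - 0)) (at y)"
    by (intro DERIV_diff DERIV_cdivide DERIV_add D1 1 2 DERIV_const)
  moreover have "H2 (x, y) = (- (y - y0) / sqrt (1 - (y - y0)\<^sup>2 - (x - x0)\<^sup>2) + - (y - - y0) / sqrt (1 - (y - - y0)\<^sup>2 - (x + x0)\<^sup>2)) / 2 - 0"
  proof -
    have q1: "1 - (y - y0)\<^sup>2 - (x - x0)\<^sup>2 = A1 (x, y)" by (simp add: A1_def)
    have q2: "1 - (y - - y0)\<^sup>2 - (x + x0)\<^sup>2 = A2 (x, y)" by (simp add: A2_def)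
    show ?thesis unfolding q1 q2 unfolding H2_def fst_conv snd_conv diff_minus_eq_add
      by (simp only: diff_0_right diff_conv_add_uminus minus_divide_left)
  qed
  ultimately show ?thesis unfolding p fst_conv snd_conv e by (simp only:)
qed

lemma dH1:
  assumes "0 < A1 p" "0 < A2 p"
  shows "((\<lambda>s. H1 (s, snd p)) has_real_derivative H11 p) (at (fst p))"
proof -
  obtain x y where p: "p = (x, y)" by (cases p)
  have e: "(\<lambda>s. H1 (s, y)) = (\<lambda>s. - ((s - x0) / sqrt (1 - (s - x0)\<^sup>2 - (y - y0)\<^sup>2) + (s - - x0) / sqrt (1 - (s - - x0)\<^sup>2 - (y + y0)\<^sup>2)) / 2)"
    by (simp add: H1_def A1_def A2_def fun_eq_iff diff_divide_distrib)
  have 1: "0 < 1 - (x - x0)\<^sup>2 - (y - y0)\<^sup>2" using assms(1) by (simp add: p A1_def)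
  have 2: "0 < 1 - (x - - x0)\<^sup>2 - (y + y0)\<^sup>2" using assms(2) by (simp add: p A2_def)
  have "((\<lambda>s. - ((s - x0) / sqrt (1 - (s - x0)\<^sup>2 - (y - y0)\<^sup>2) + (s - - x0) / sqrt (1 - (s - - x0)\<^sup>2 - (y + y0)\<^sup>2)) / 2)
     has_real_derivative (- ((1 - (y - y0)\<^sup>2) / ((1 - (x - x0)\<^sup>2 - (y - y0)\<^sup>2) * sqrt (1 - (x - x0)\<^sup>2 - (y - y0)\<^sup>2))
        + (1 - (y + y0)\<^sup>2) / ((1 - (x - - x0)\<^sup>2 - (y + y0)\<^sup>2) * sqrt (1 - (x - - x0)\<^sup>2 - (y + y0)\<^sup>2))) / 2)) (at x)"
    by (intro DERIV_cdivide DERIV_minus DERIV_add D2 1 2)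
  moreover have "H11 (x, y) = (- ((1 - (y - y0)\<^sup>2) / ((1 - (x - x0)\<^sup>2 - (y - y0)\<^sup>2) * sqrt (1 - (x - x0)\<^sup>2 - (y - y0)\<^sup>2))
        + (1 - (y + y0)\<^sup>2) / ((1 - (x - - x0)\<^sup>2 - (y + y0)\<^sup>2) * sqrt (1 - (x - - x0)\<^sup>2 - (y + y0)\<^sup>2))) / 2)"
  proof -
    have q1: "1 - (x - x0)\<^sup>2 - (y - y0)\<^sup>2 = A1 (x, y)" by (simp add: A1_def)
    have q2: "1 - (x - - x0)\<^sup>2 - (y + y0)\<^sup>2 = A2 (x, y)" by (simp add: A2_def)
    show ?thesis unfolding q1 q2 unfolding H11_def fst_conv snd_conv by (rule refl)
  qed
  ultimately show ?thesis unfolding p fst_conv snd_conv e by (simp only:)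
qed

lemma d1h_eq: "0 < A1 p \<Longrightarrow> 0 < A2 p \<Longrightarrow> d1 h p = H1 p"
  unfolding d1_def by (rule DERIV_imp_deriv[OF dh1])
lemma d2h_eq: "0 < A1 p \<Longrightarrow> 0 < A2 p \<Longrightarrow> d2 h p = H2 p"
  unfolding d2_def by (rule DERIV_imp_deriv[OF dh2])

lemma d11h_eq:
  assumes "0 < A1 p" "0 < A2 p"
  shows "d1 (d1 h) p = H11 p"
proof -
  let ?S = "{s. 0 < A1 (s, snd p) \<and> 0 < A2 (s, snd p)}"
  have "open ?S" unfolding A1_def A2_def
    by (intro open_Collect_conj open_Collect_less continuous_intros)
  moreover have "fst p \<in> ?S" using assms by simp
  moreover have "\<And>s. s \<in> ?S \<Longrightarrow> H1 (s, snd p) = d1 h (s, snd p)"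
    using d1h_eq by simp
  ultimately have "((\<lambda>s. d1 h (s, snd p)) has_real_derivative H11 p) (at (fst p))"
    by (rule has_field_derivative_transform_within_open[OF dH1[OF assms]])
  then show ?thesis unfolding d1_def[of "d1 h"] by (rule DERIV_imp_deriv)
qed

lemma w_eq: "w = (2077/5000, 3631/5000)" by (simp add: w_def)

lemma kappa_w: "kappa_e1 h w < 1"
proof -
  have b: "(534598681/1000000000) \<le> sqrt (A1 w)" "sqrt (A1 w) \<le> (267299341/500000000)" "(24392721/125000000) \<le> sqrt (A2 w)" "sqrt (A2 w) \<le> (195141769/1000000000)"
    using bnd_w(1-4) unfolding w_eq by simp_all
  define r1 where "r1 = sqrt (A1 w)"
  define r2 where "r2 = sqrt (A2 w)"
  have r0: "0 < r1" "0 < r2" using b(1,3) unfolding r1_def r2_def by linarith+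
  have A0: "0 < A1 w" "0 < A2 w" using r0 unfolding r1_def r2_def by simp_all
  have rA: "A1 w = r1 * r1" "A2 w = r2 * r2" using A0 unfolding r1_def r2_def by simp_all
  define t1 where "t1 = 1 / r1"
  define t2 where "t2 = 1 / r2"
  have t1b: "(935281/500000) \<le> t1" "t1 \<le> (1870563/1000000)" unfolding t1_def using b r0 unfolding r1_def
    by (simp_all add: divide_simps)
  have t2b: "(5124479/1000000) \<le> t2" "t2 \<le> (16014/3125)" unfolding t2_def using b r0 unfolding r2_def
    by (simp_all add: divide_simps)
  define a1 where "a1 = fst w - x0"
  define a2 where "a2 = fst w + x0"
  define b1 where "b1 = snd w - y0"
  define b2 where "b2 = snd w + y0"
  define c1 where "c1 = 1 - b1\<^sup>2"
  define c2 where "c2 = 1 - b2\<^sup>2"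
  have H1w: "d1 h w = - ((a1 * t1 + a2 * t2) / 2)"
    unfolding d1h_eq[OF A0] H1_def a1_def a2_def t1_def t2_def r1_def[symmetric] r2_def[symmetric]
    using r0 by (simp add: field_simps)
  have H2w: "d2 h w = - ((b1 * t1 + b2 * t2) / 2)"
    unfolding d2h_eq[OF A0] H2_def b1_def b2_def t1_def t2_def r1_def[symmetric] r2_def[symmetric]
    using r0 by (simp add: field_simps)
  have H11w: "d1 (d1 h) w = - ((c1 * t1^3 + c2 * t2^3) / 2)"
    unfolding d11h_eq[OF A0] H11_def c1_def c2_def b1_def b2_def rA t1_def t2_def
    unfolding r1_def[symmetric] r2_def[symmetric] using r0 by (simp add: field_simps power3_eq_cube)
  have cs: "0 \<le> a1" "0 \<le> a2" "0 \<le> b1" "0 \<le> b2" "0 \<le> c1" "0 \<le> c2"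
    unfolding a1_def a2_def b1_def b2_def c1_def c2_def w_eq x0_def y0_def by (simp_all add: power2_eq_square)
  have key: "((c1 * (1870563/1000000)^3 + c2 * (16014/3125)^3) / 2)\<^sup>2 < (1 + ((a1 * (935281/500000) + a2 * (5124479/1000000)) / 2)\<^sup>2 + ((b1 * (935281/500000) + b2 * (5124479/1000000)) / 2)\<^sup>2) * (1 + ((a1 * (935281/500000) + a2 * (5124479/1000000)) / 2)\<^sup>2)\<^sup>2"
    unfolding a1_def a2_def b1_def b2_def c1_def c2_def w_eq x0_def y0_def by (simp add: power2_eq_square power3_eq_cube)
  have main: "(c1 * t1^3 + c2 * t2^3) / 2 < sqrt (1 + ((a1 * t1 + a2 * t2) / 2)\<^sup>2 + ((b1 * t1 + b2 * t2) / 2)\<^sup>2) * (1 + ((a1 * t1 + a2 * t2) / 2)\<^sup>2)"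
    by (rule kappa_num[OF _ t1b _ t2b cs key]) simp_all
  have t0: "0 \<le> t1" "0 \<le> t2" using r0 unfolding t1_def t2_def by simp_all
  have nn: "0 \<le> (c1 * t1^3 + c2 * t2^3) / 2" using cs t0 by simp
  have den: "0 < sqrt (1 + ((a1 * t1 + a2 * t2) / 2)\<^sup>2 + ((b1 * t1 + b2 * t2) / 2)\<^sup>2) * (1 + ((a1 * t1 + a2 * t2) / 2)\<^sup>2)"
    by (intro mult_pos_pos) (simp_all add: add_pos_nonneg)
  show ?thesis unfolding kappa_e1_def H1w H2w H11w
    using main nn den by (simp add: abs_minus_cancel abs_of_nonneg power2_minus)
qed




lemma comb:
  fixes S0 S1 S2 N Q l0 l1 l2 k g :: real
  assumes "S0 \<le> 1" "S1 \<le> 1" "S2 \<le> 1" "0 \<le> N"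
    "Q - 1 = l0 * (S0 - 1) + l1 * (S1 - 1) + l2 * (S2 - 1) - k * N + g"
    "0 \<le> l0" "0 \<le> l1" "0 \<le> l2" "0 \<le> k" "g < 0"
  shows "Q < 1"
proof -
  have "l0 * (S0 - 1) \<le> 0" "l1 * (S1 - 1) \<le> 0" "l2 * (S2 - 1) \<le> 0" "0 \<le> k * N"
    using assms by (simp_all add: mult_nonneg_nonpos)
  then show ?thesis using assms(5,10) by linarith
qed

lemma cert:
  fixes a b c :: real
  assumes h0: "((a - (71/200))\<^sup>2 + (b - (37/50))\<^sup>2 + (c - (141427/10000000))\<^sup>2) \<le> 1" and h1: "((a - (3/10))\<^sup>2 + (b - (37/50))\<^sup>2 + (c - (245829/5000000))\<^sup>2) \<le> 1" and h2: "((a - (33/100))\<^sup>2 + (b - (739/1000))\<^sup>2 + (c - (352461/10000000))\<^sup>2) \<le> 1"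
  shows "((a - (33/100))\<^sup>2 + (b - (37/50))\<^sup>2 + (c - (79763/2500000))\<^sup>2) < 1"
proof -
  have e: "((a - (33/100))\<^sup>2 + (b - (37/50))\<^sup>2 + (c - (79763/2500000))\<^sup>2) - 1 = (73029/200000) * (((a - (71/200))\<^sup>2 + (b - (37/50))\<^sup>2 + (c - (141427/10000000))\<^sup>2) - 1) + (306409/1000000) * (((a - (3/10))\<^sup>2 + (b - (37/50))\<^sup>2 + (c - (245829/5000000))\<^sup>2) - 1) + (65759/200000) * (((a - (33/100))\<^sup>2 + (b - (739/1000))\<^sup>2 + (c - (352461/10000000))\<^sup>2) - 1) - (349/1000000) * ((a - (2061/13960))\<^sup>2 + (b - (-14107/69800))\<^sup>2 + (c - (-218696867/872500000))\<^sup>2) + (-2834799349981077/174500000000000000000)"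
    by (simp add: power2_eq_square algebra_simps) (simp add: field_simps)
  have "((a - (2061/13960))\<^sup>2 + (b - (-14107/69800))\<^sup>2 + (c - (-218696867/872500000))\<^sup>2) \<ge> 0" by simp
  then show ?thesis by (rule comb[OF h0 h1 h2 _ e]) simp_all
qed


lemma good_w': "good w" using good_w by (simp add: w_eq)

lemma inU_w: "inU w"
proof -
  note b = bnd_w[folded w_eq]
  show ?thesis unfolding inU_def
  proof (intro conjI)
    have "0 < sqrt (A1 w)" using b(1) by linarith
    then show "0 < A1 w" by simp
    have "0 < sqrt (A2 w)" using b(3) by linarith
    then show "0 < A2 w" by simp
    show "sqrt (A1 w) - sqrt (A2 w) < 2 * z0" using b(2,3) by (simp add: z0_def)
    show "sqrt (A2 w) - sqrt (A1 w) < 2 * z0" using b(1,4) by (simp add: z0_def)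
    show "0 < h w" using b(5) by (simp add: z0_def)
  qed
qed

lemma in_K_pt: "good p \<Longrightarrow> \<bar>z\<bar> \<le> h p \<Longrightarrow> pt p z \<in> K"
  by (rule steiner_mem[THEN iffD2])

lemma notin_K_pt:
  assumes "good p" "h p < \<bar>z\<bar>" shows "pt p z \<notin> K"
proof
  assume "pt p z \<in> K"
  hence "\<bar>z\<bar> \<le> h p" by (rule steiner_mem[OF assms(1), THEN iffD1])
  with assms(2) show False by linarith
qed

lemma not_S3: "K \<notin> S3"
proof
  assume "K \<in> S3"
  then obtain F where KF: "K = (\<Inter>c\<in>F. unit_ball3 c)" by (auto simp: S3_def)
  have P0: "pt (71/200, 37/50) (141427/10000000) \<in> K"
    using bnd_P0(5) by (intro in_K_pt good_P0) (simp add: z0_def)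
  have P1: "pt (3/10, 37/50) (245829/5000000) \<in> K"
    using bnd_P1(5) by (intro in_K_pt good_P1) (simp add: z0_def)
  have P2: "pt (33/100, 739/1000) (352461/10000000) \<in> K"
    using bnd_P2(5) by (intro in_K_pt good_P2) (simp add: z0_def)
  have Q: "pt (33/100, 37/50) (79763/2500000) \<notin> K"
    using bnd_Q(6) by (intro notin_K_pt good_Q) (simp add: z0_def)
  then obtain c where c: "c \<in> F" "pt (33/100, 37/50) (79763/2500000) \<notin> unit_ball3 c"
    unfolding KF by blast
  have "pt (71/200, 37/50) (141427/10000000) \<in> unit_ball3 c"
    "pt (3/10, 37/50) (245829/5000000) \<in> unit_ball3 c"
    "pt (33/100, 739/1000) (352461/10000000) \<in> unit_ball3 c"
    using P0 P1 P2 c(1) unfolding KF by blast+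
  hence "dist c (pt (71/200, 37/50) (141427/10000000)) \<le> 1"
    "dist c (pt (3/10, 37/50) (245829/5000000)) \<le> 1"
    "dist c (pt (33/100, 739/1000) (352461/10000000)) \<le> 1"
    unfolding unit_ball3_def by simp_all
  hence "(c$1 - 71/200)\<^sup>2 + (c$2 - 37/50)\<^sup>2 + (c$3 - 141427/10000000)\<^sup>2 \<le> 1"
    "(c$1 - 3/10)\<^sup>2 + (c$2 - 37/50)\<^sup>2 + (c$3 - 245829/5000000)\<^sup>2 \<le> 1"
    "(c$1 - 33/100)\<^sup>2 + (c$2 - 739/1000)\<^sup>2 + (c$3 - 352461/10000000)\<^sup>2 \<le> 1"
    unfolding dist3_le1 by simp_all
  hence "(c$1 - 33/100)\<^sup>2 + (c$2 - 37/50)\<^sup>2 + (c$3 - 79763/2500000)\<^sup>2 < 1"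
    by (intro cert) simp_all
  hence "dist c (pt (33/100, 37/50) (79763/2500000)) \<le> 1"
    unfolding dist3_le1 by simp
  with c(2) show False unfolding unit_ball3_def by simp
qed



theorem theorem4p4:
  shows "steiner_sym e3 L \<notin> S3
    \<and> pt w 0 \<in> proj_perp e3 ` L
    \<and> {p \<in> L. \<exists>z. p = pt w z} = {pt w z | z. - f_d w \<le> z \<and> z \<le> g_u w}
    \<and> (\<exists>V. open V \<and> pt w (h w) \<in> V \<and>
          frontier (steiner_sym e3 L) \<inter> V = {pt x (h x) | x. True} \<inter> V)
    \<and> (\<exists>V. open V \<and> pt w (- h w) \<in> V \<and>
          frontier (steiner_sym e3 L) \<inter> V = {pt x (- h x) | x. True} \<inter> V)
    \<and> kappa_e1 h w < 1"
proof (intro conjI)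
  show "steiner_sym e3 L \<notin> S3" by (rule not_S3)
  have F: "pt w t \<in> L \<longleftrightarrow> - f_d w \<le> t \<and> t \<le> g_u w" for t
  proof -
    have "t \<in> {t. pt w t \<in> L} \<longleftrightarrow> t \<in> {- f_d w .. g_u w}"
      unfolding fiber[OF good_w'] by (rule refl)
    then show ?thesis by simp
  qed
  have "pt w (g_u w) \<in> L" using F fiber_le[OF good_w'] by simp
  then show "pt w 0 \<in> proj_perp e3 ` L"
    by (rule image_eqI[where f="proj_perp e3" and x="pt w (g_u w)", OF proj_pt[symmetric, of w "g_u w"]])
  show "{p \<in> L. \<exists>z. p = pt w z} = {pt w z | z. - f_d w \<le> z \<and> z \<le> g_u w}"
    using F by blast
  show "\<exists>V. open V \<and> pt w (h w) \<in> V \<and>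
          frontier (steiner_sym e3 L) \<inter> V = {pt x (h x) | x. True} \<inter> V"
    using frontier_local[of 1 w, OF _ inU_w] by simp
  show "\<exists>V. open V \<and> pt w (- h w) \<in> V \<and>
          frontier (steiner_sym e3 L) \<inter> V = {pt x (- h x) | x. True} \<inter> V"
    using frontier_local[of "-1" w, OF _ inU_w] by simp
  show "kappa_e1 h w < 1" by (rule kappa_w)
qed


end
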